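(* Let $F$ be a distribution on $\mathbb{R}$ with a density, and let $X, X_1, X_2,\ldots$ be i.i.d. with distribution $F$ and mean $\mu$. Suppose $\bar F(x)=1-F(x)=L(x)x^{-\alpha}$ for a slowly varying $L$ and $\alpha>2$, and $E|X|^{2+\delta}<\infty$ for some $\delta>0$. Let $\gamma=\gamma(n)=n\mu+\omega(\sqrt{n\log n})$ and let $u=u(n)=\omega\big((\gamma-n\mu)^\beta\big)$ for some $\beta>1$. Then, as $n\to\infty$, $$\tilde p(\tilde F_u)-\tilde p(F)=o(\tilde p(F)).$$
   Context: $S_n=X_1+\cdots+X_n$. For a distribution $G$, $\tilde p(G)=P_G(S_n\ge\gamma)$ is the probability that $S_n\ge\gamma$ when $X_1,\ldots,X_n$ are i.i.d. with law $G$. The truncated distribution $\tilde F_u$ is $\tilde F_u(x)=F(x)/F(u)$ for $x\le u$ and $1$ for $x>u$. $a_n=o(b_n)$: $a_n/b_n\to0$; $a_n=\omega(b_n)$: $a_n/b_n\to\infty$. *)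

theory Defs
  imports "HOL-Probability.Probability" "HOL-Library.Landau_Symbols"
begin

definition slowly_varying :: "(real \<Rightarrow> real) \<Rightarrow> bool" where
  "slowly_varying L \<longleftrightarrow> (\<forall>\<^sub>F x in at_top. L x > 0) \<and>
     (\<forall>c>0. ((\<lambda>x. L (c * x) / L x) \<longlongrightarrow> 1) at_top)"

definition ptilde :: "nat \<Rightarrow> real \<Rightarrow> real measure \<Rightarrow> real" where
  "ptilde n \<gamma> G = measure (PiM {..<n} (\<lambda>_. G))
      {x \<in> space (PiM {..<n} (\<lambda>_. G)). (\<Sum>i<n. x i) \<ge> \<gamma>}"

text \<open>Truncated law F~_u: cdf F(x)/F(u) for x \<le> u, 1 for x > u, i.e. the law conditioned on (-\<infinity>,u].\<close>
definition trunc_dist :: "real measure \<Rightarrow> real \<Rightarrow> real measure" where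
  "trunc_dist G u = uniform_measure G {..u}"

end

theory Submission
  imports Defs
begin

lemma PiM_uniform:
  assumes N: "prob_space N" and fin: "finite I" and A: "A \<in> sets N" and pos: "emeasure N A \<noteq> 0"
  shows "PiM I (\<lambda>_. uniform_measure N A) = uniform_measure (PiM I (\<lambda>_. N)) (PiE I (\<lambda>_. A))"
proof -
  interpret N: prob_space N by (rule N)
  have G: "prob_space (uniform_measure N A)"
    by (rule prob_space_uniform_measure) (use pos in auto)
  interpret G: product_prob_space "\<lambda>_. uniform_measure N A"
    by (intro product_prob_spaceI G)
  interpret NN: product_prob_space "\<lambda>_. N"
    by (intro product_prob_spaceI N)
  have boxs: "PiE I (\<lambda>_. A) \<in> sets (PiM I (\<lambda>_. N))"
    by (rule sets_PiM_I_finite) (use fin A in auto)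
  show ?thesis
  proof (rule G.PiM_eqI[symmetric])
    show "finite I" by fact
    show "sets (uniform_measure (Pi\<^sub>M I (\<lambda>_. N)) (Pi\<^sub>E I (\<lambda>_. A))) = sets (Pi\<^sub>M I (\<lambda>_. uniform_measure N A))"
      unfolding sets_uniform_measure by (rule sets_PiM_cong) auto
    fix B assume B: "\<And>i. i \<in> I \<Longrightarrow> B i \<in> sets (uniform_measure N A)"
    have Bs: "PiE I B \<in> sets (PiM I (\<lambda>_. N))"
      by (rule sets_PiM_I_finite) (use fin B in auto)
    have "emeasure (uniform_measure (Pi\<^sub>M I (\<lambda>_. N)) (Pi\<^sub>E I (\<lambda>_. A))) (Pi\<^sub>E I B)
        = emeasure (Pi\<^sub>M I (\<lambda>_. N)) (Pi\<^sub>E I (\<lambda>_. A) \<inter> Pi\<^sub>E I B) / emeasure (Pi\<^sub>M I (\<lambda>_. N)) (Pi\<^sub>E I (\<lambda>_. A))"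
      by (rule emeasure_uniform_measure[OF boxs Bs])
    also have "Pi\<^sub>E I (\<lambda>_. A) \<inter> Pi\<^sub>E I B = Pi\<^sub>E I (\<lambda>i. A \<inter> B i)" by (rule PiE_Int)
    also have "emeasure (Pi\<^sub>M I (\<lambda>_. N)) (Pi\<^sub>E I (\<lambda>i. A \<inter> B i)) = (\<Prod>i\<in>I. emeasure N (A \<inter> B i))"
      using B A fin by (subst NN.emeasure_PiM) auto
    also have "emeasure (Pi\<^sub>M I (\<lambda>_. N)) (Pi\<^sub>E I (\<lambda>_. A)) = (\<Prod>i\<in>I. emeasure N A)"
      using A fin by (subst NN.emeasure_PiM) auto
    also have "(\<Prod>i\<in>I. emeasure N (A \<inter> B i)) / (\<Prod>i\<in>I. emeasure N A) = (\<Prod>i\<in>I. emeasure N (A \<inter> B i) / emeasure N A)"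
    proof -
      have mpos: "measure N A > 0" using pos by (simp add: N.emeasure_eq_measure zero_less_measure_iff)
      have "(\<Prod>i\<in>I. emeasure N (A \<inter> B i) / emeasure N A) = (\<Prod>i\<in>I. ennreal (measure N (A \<inter> B i) / measure N A))"
        by (intro prod.cong refl) (simp add: N.emeasure_eq_measure divide_ennreal mpos)
      also have "\<dots> = ennreal (\<Prod>i\<in>I. measure N (A \<inter> B i) / measure N A)"
        by (rule prod_ennreal) (auto simp: measure_nonneg)
      also have "\<dots> = ennreal ((\<Prod>i\<in>I. measure N (A \<inter> B i)) / (\<Prod>i\<in>I. measure N A))"
        by (simp add: prod_dividef)
      also have "\<dots> = (\<Prod>i\<in>I. emeasure N (A \<inter> B i)) / (\<Prod>i\<in>I. emeasure N A)"
        using mpos by (simp add: N.emeasure_eq_measure prod_ennreal measure_nonneg prod_nonneg ennreal_power[symmetric] divide_ennreal[symmetric])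
      finally show ?thesis by simp
    qed
    also have "\<dots> = (\<Prod>i\<in>I. emeasure (uniform_measure N A) (B i))"
      using B A by (intro prod.cong refl) auto
    finally show "emeasure (uniform_measure (Pi\<^sub>M I (\<lambda>_. N)) (Pi\<^sub>E I (\<lambda>_. A))) (Pi\<^sub>E I B) = (\<Prod>i\<in>I. emeasure (uniform_measure N A) (B i))" .
  qed
qed


lemma measure_PiM_box:
  assumes N: "prob_space N" and fin: "finite I" and A: "A \<in> sets N"
  shows "measure (PiM I (\<lambda>_. N)) (PiE I (\<lambda>_. A)) = measure N A ^ card I"
proof -
  interpret N: prob_space N by (rule N)
  interpret NN: product_prob_space "\<lambda>_. N"
    by (intro product_prob_spaceI N)
  have "emeasure (PiM I (\<lambda>_. N)) (PiE I (\<lambda>_. A)) = (\<Prod>i\<in>I. emeasure N A)"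
    using A fin by (subst NN.emeasure_PiM) auto
  also have "\<dots> = ennreal (measure N A ^ card I)"
    by (simp add: N.emeasure_eq_measure prod_ennreal ennreal_power measure_nonneg)
  finally show ?thesis by (simp add: measure_def)
qed

lemma diff_bound:
  fixes N :: "real measure" and n :: nat and u \<gamma> q :: real
  assumes N: "prob_space N" and sN: "sets N = sets borel" and n: "n \<ge> 1"
    and q: "q = 1 - measure N {..u}" and nq: "n * q \<le> 1/2"
  shows "\<bar>ptilde n \<gamma> (trunc_dist N u) - ptilde n \<gamma> N\<bar> \<le> 3 * n * q"
proof -
  interpret N: prob_space N by (rule N)
  define P where "P = PiM {..<n} (\<lambda>_. N)"
  interpret P: prob_space P unfolding P_def by (rule prob_space_PiM) (use N in auto)
  define E where "E = {x \<in> space P. (\<Sum>i<n. x i) \<ge> \<gamma>}"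
  define B where "B = PiE {..<n} (\<lambda>_. {..u})"
  define F where "F = measure N {..u}"
  have uset: "{..u} \<in> sets N" using sN by simp
  have q0: "q \<ge> 0" using q N.prob_le_1 by simp
  have nq0: "n * q \<ge> 0" using q0 by simp
  have "1 * q \<le> real n * q" using n q0 by (intro mult_right_mono) auto
  then have q1: "q \<le> 1/2" using nq by simp
  have Fq: "F = 1 - q" using q F_def by simp
  have Fpos: "F > 0" using Fq q1 by simp
  have Es: "E \<in> sets P" unfolding E_def P_def using sN by measurable
  have Bs: "B \<in> sets P" unfolding B_def P_def by (rule sets_PiM_I_finite) (use uset in auto)
  have PB: "P.prob B = F ^ n" unfolding P_def B_def F_def
    using measure_PiM_box[OF N _ uset, of "{..<n}"] by simp
  have bern: "1 - n * q \<le> F ^ n"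
    using Bernoulli_inequality[of "-q" n] q1 Fq by simp
  have Fn_pos: "F ^ n \<ge> 1/2" using bern nq by simp
  have Fn1: "F ^ n \<le> 1" using Fq q0 Fpos by (intro power_le_one) auto
  have G: "ptilde n \<gamma> (trunc_dist N u) = P.prob (B \<inter> E) / F ^ n"
  proof -
    have e: "emeasure N {..u} \<noteq> 0" using Fpos F_def N.emeasure_eq_measure by auto
    have "PiM {..<n} (\<lambda>_. trunc_dist N u) = uniform_measure P B"
      unfolding trunc_dist_def P_def B_def by (rule PiM_uniform[OF N _ uset e]) simp
    moreover have "{x \<in> space (PiM {..<n} (\<lambda>_. trunc_dist N u)). (\<Sum>i<n. x i) \<ge> \<gamma>} = E"
      unfolding E_def P_def trunc_dist_def by (simp add: space_PiM)
    ultimately have "ptilde n \<gamma> (trunc_dist N u) = measure (uniform_measure P B) E"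
      unfolding ptilde_def by simp
    also have "\<dots> = P.prob (B \<inter> E) / P.prob B"
      using Fn_pos Fpos PB Es by (subst measure_uniform_measure) (auto simp: P.emeasure_eq_measure)
    finally show ?thesis using PB by simp
  qed
  have M: "ptilde n \<gamma> N = P.prob E" unfolding ptilde_def E_def P_def by simp
  define a where "a = P.prob (B \<inter> E)"
  have a0: "a \<ge> 0" unfolding a_def by simp
  have a1: "a \<le> 1" unfolding a_def by simp
  have "P.prob E = a + P.prob (E - B)"
  proof -
    have "E = (B \<inter> E) \<union> (E - B)" by auto
    then have "P.prob E = P.prob ((B \<inter> E) \<union> (E - B))" by simp
    also have "\<dots> = a + P.prob (E - B)" unfolding a_def
      by (rule P.finite_measure_Union) (use Es Bs in auto)
    finally show ?thesis .
  qed
  moreover have "P.prob (E - B) \<le> P.prob (space P - B)"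
    by (rule P.finite_measure_mono) (use Es Bs sets.sets_into_space in auto)
  moreover have "P.prob (space P - B) = 1 - F ^ n" using P.prob_compl[OF Bs] PB by simp
  ultimately have ba: "P.prob E - a \<le> n * q" "P.prob E - a \<ge> 0" using bern by auto
  have "a / F ^ n - a = a * (1 - F ^ n) / F ^ n" using Fn_pos Fpos by (simp add: right_diff_distrib diff_divide_distrib)
  also have "\<dots> \<le> 1 * (n * q) / (1/2)"
    using a0 a1 bern Fn_pos nq0 Fn1
    by (intro frac_le mult_mono) auto
  finally have ab: "a / F ^ n - a \<le> 2 * (n * q)" by simp
  have "a / F ^ n - a \<ge> 0" using a0 Fn_pos a1 Fn1
    by (simp add: field_simps mult_left_le)
  then show ?thesis using G M ab ba unfolding a_def by linarith
qed



lemma ratio_bound: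
  fixes Fb :: "real \<Rightarrow> real"
  assumes mono: "\<And>x y. x \<le> y \<Longrightarrow> Fb y \<le> Fb x" and nonneg: "\<And>x. Fb x \<ge> 0" and x0: "x0 > 0"
    and half: "\<And>x. x \<ge> x0 \<Longrightarrow> Fb (2 * x) \<le> Fb x / 2"
    and x: "x0 \<le> x" and y: "x \<le> y"
  shows "Fb y \<le> 2 * (x / y) * Fb x"
proof -
  have main: "\<forall>x y. x0 \<le> x \<longrightarrow> x \<le> y \<longrightarrow> y < 2 ^ m * x \<longrightarrow> Fb y \<le> 2 * (x / y) * Fb x" for m :: nat
  proof (induction m)
    case 0
    then show ?case by auto
  next
    case (Suc m)
    show ?case
    proof (intro allI impI)
      fix x y :: real assume x: "x0 \<le> x" and xy: "x \<le> y" and y: "y < 2 ^ Suc m * x"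
      have xpos: "x > 0" using x x0 by simp
      show "Fb y \<le> 2 * (x / y) * Fb x"
      proof (cases "y < 2 * x")
        case True
        have "Fb y \<le> Fb x" using mono xy by simp
        also have "\<dots> \<le> 2 * (x / y) * Fb x"
        proof -
          have "1 \<le> 2 * (x / y)" using True xpos xy by (simp add: field_simps)
          then show ?thesis using nonneg[of x] mult_right_mono[of 1 "2 * (x / y)" "Fb x"] by simp
        qed
        finally show ?thesis .
      next
        case False
        have "Fb y \<le> 2 * ((2 * x) / y) * Fb (2 * x)"
        proof -
          have "x0 \<le> 2 * x" "2 * x \<le> y" "y < 2 ^ m * (2 * x)" using x xpos False y by auto
          then show ?thesis using Suc.IH by blast
        qed
        also have "\<dots> \<le> 2 * ((2 * x) / y) * (Fb x / 2)"
          using half[OF x] xpos xy by (intro mult_left_mono) auto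
        also have "\<dots> = 2 * (x / y) * Fb x" by simp
        finally show ?thesis .
      qed
    qed
  qed
  obtain m :: nat where "y / x < 2 ^ m" using real_arch_pow[of 2 "y / x"] by auto
  then have "y < 2 ^ m * x" using x x0 by (simp add: field_simps)
  then show ?thesis using main x y by blast
qed

lemma half_exists:
  fixes Fb L :: "real \<Rightarrow> real" and \<alpha> :: real
  assumes tl: "\<And>x. x > 0 \<Longrightarrow> Fb x = L x * x powr (-\<alpha>)" and sv: "slowly_varying L"
    and alpha: "\<alpha> > 2" and nonneg: "\<And>x. Fb x \<ge> 0"
  shows "\<exists>x0>0. \<forall>x\<ge>x0. Fb (2 * x) \<le> Fb x / 2"
proof -
  have ev1: "\<forall>\<^sub>F x in at_top. L x > 0" using sv unfolding slowly_varying_def by blast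
  have "((\<lambda>x. L (2 * x) / L x) \<longlongrightarrow> 1) at_top" using sv unfolding slowly_varying_def by simp
  then have ev2: "\<forall>\<^sub>F x in at_top. L (2 * x) / L x < 2" by (rule order_tendstoD(2)) simp
  have "\<forall>\<^sub>F x in at_top. L x > 0 \<and> L (2 * x) / L x < 2 \<and> x > (0::real)"
    using ev1 ev2 eventually_gt_at_top[of 0] by eventually_elim auto
  then obtain x0 where x0: "\<And>x. x \<ge> x0 \<Longrightarrow> L x > 0 \<and> L (2 * x) / L x < 2 \<and> x > 0"
    unfolding eventually_at_top_linorder by blast
  define x1 where "x1 = max x0 1"
  have p: "2 powr (-\<alpha>) \<le> 1/4"
  proof -
    have "2 powr (-\<alpha>) \<le> 2 powr (-2)" using alpha by (intro powr_mono) auto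
    also have "(2::real) powr (-2) = 1/4" by (simp add: powr_minus powr_numeral)
    finally show ?thesis .
  qed
  have "\<forall>x\<ge>x1. Fb (2 * x) \<le> Fb x / 2"
  proof (intro allI impI)
    fix x assume "x \<ge> x1"
    then have h: "L x > 0" "L (2 * x) / L x < 2" "x > 0" using x0 unfolding x1_def by auto
    have L2: "L (2 * x) \<le> 2 * L x" using h by (simp add: divide_less_eq)
    have xa: "x powr (-\<alpha>) > 0" using h by simp
    have "Fb (2 * x) = L (2 * x) * 2 powr (-\<alpha>) * x powr (-\<alpha>)"
      using tl[of "2 * x"] h by (simp add: powr_mult)
    also have "\<dots> \<le> 2 * L x * 2 powr (-\<alpha>) * x powr (-\<alpha>)"
      using L2 xa by (intro mult_right_mono) auto
    also have "\<dots> = 2 * 2 powr (-\<alpha>) * Fb x" using tl[of x] h by simp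
    also have "\<dots> \<le> 2 * (1/4) * Fb x" using p nonneg[of x] by (intro mult_right_mono) auto
    finally show "Fb (2 * x) \<le> Fb x / 2" using nonneg[of x] by simp
  qed
  moreover have "x1 > 0" unfolding x1_def by simp
  ultimately show ?thesis by blast
qed



lemma coord_indep:
  assumes N: "prob_space N" and fin: "finite I"
  shows "prob_space.indep_vars (PiM I (\<lambda>_. N)) (\<lambda>_. N) (\<lambda>i x. x i) I"
proof -
  interpret P: prob_space "PiM I (\<lambda>_. N)" by (rule prob_space_PiM) (use N in auto)
  show ?thesis
  proof (cases "I = {}")
    case True
    show ?thesis unfolding P.indep_vars_def P.indep_sets_def using True by auto
  next
    case False
    have 1: "distr (PiM I (\<lambda>_. N)) (PiM I (\<lambda>_. N)) (\<lambda>x. restrict x I) = PiM I (\<lambda>_. N)"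
      by (subst distr_cong[where g="\<lambda>x. x"]) (auto simp: space_PiM distr_id2)
    have 2: "PiM I (\<lambda>i. distr (PiM I (\<lambda>_. N)) N (\<lambda>x. x i)) = PiM I (\<lambda>_. N)"
      by (rule PiM_cong, simp, rule distr_PiM_component) (use N in auto)
    show ?thesis
      by (subst P.indep_vars_iff_distr_eq_PiM'[OF False]) (auto simp: 1 2)
  qed
qed

lemma comp_integral:
  fixes g :: "real \<Rightarrow> real" and N :: "real measure"
  assumes N: "prob_space N" and sN: "sets N = sets borel" and i: "i \<in> I" and g: "g \<in> borel_measurable borel"
  shows "integral\<^sup>L (PiM I (\<lambda>_. N)) (\<lambda>x. g (x i)) = integral\<^sup>L N g"
    and "integrable (PiM I (\<lambda>_. N)) (\<lambda>x. g (x i)) \<longleftrightarrow> integrable N g"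
proof -
  have D: "distr (PiM I (\<lambda>_. N)) N (\<lambda>x. x i) = N"
    by (rule distr_PiM_component) (use N i in auto)
  have gm: "g \<in> borel_measurable N" using g by (simp add: measurable_cong_sets[OF sN refl])
  have m: "(\<lambda>x. x i) \<in> measurable (PiM I (\<lambda>_. N)) N" using i by measurable
  show "integral\<^sup>L (PiM I (\<lambda>_. N)) (\<lambda>x. g (x i)) = integral\<^sup>L N g"
    using integral_distr[OF m gm] D by (simp add: comp_def)
  show "integrable (PiM I (\<lambda>_. N)) (\<lambda>x. g (x i)) \<longleftrightarrow> integrable N g"
    using integrable_distr_eq[OF m gm] D by simp
qed

lemma comp_prob:
  fixes N :: "real measure"
  assumes N: "prob_space N" and sN: "sets N = sets borel" and i: "i \<in> I" and S: "S \<in> sets borel"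
  shows "measure (PiM I (\<lambda>_. N)) {x \<in> space (PiM I (\<lambda>_. N)). x i \<in> S} = measure N S"
proof -
  have D: "distr (PiM I (\<lambda>_. N)) N (\<lambda>x. x i) = N"
    by (rule distr_PiM_component) (use N i in auto)
  have m: "(\<lambda>x. x i) \<in> measurable (PiM I (\<lambda>_. N)) N" using i by measurable
  have "measure N S = measure (distr (PiM I (\<lambda>_. N)) N (\<lambda>x. x i)) S" using D by simp
  also have "\<dots> = measure (PiM I (\<lambda>_. N)) ((\<lambda>x. x i) -` S \<inter> space (PiM I (\<lambda>_. N)))"
    by (rule measure_distr[OF m]) (use S sN in simp)
  finally show ?thesis by (auto intro!: arg_cong[where f="measure _"])
qed

lemma sum_sq_integral:
  fixes N :: "real measure" and K :: "nat set"
  assumes N: "prob_space N" and sN: "sets N = sets borel" and fin: "finite I" and K: "K \<subseteq> I"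
    and int2: "integrable N (\<lambda>x. x\<^sup>2)" and mu: "\<mu> = integral\<^sup>L N (\<lambda>x. x)"
  shows "integrable (PiM I (\<lambda>_. N)) (\<lambda>x. (\<Sum>j\<in>K. x j - \<mu>)\<^sup>2)"
    and "integral\<^sup>L (PiM I (\<lambda>_. N)) (\<lambda>x. (\<Sum>j\<in>K. x j - \<mu>)\<^sup>2) = card K * integral\<^sup>L N (\<lambda>x. (x - \<mu>)\<^sup>2)"
    and "integral\<^sup>L (PiM I (\<lambda>_. N)) (\<lambda>x. (\<Sum>j\<in>K. x j - \<mu>)) = 0"
proof -
  define P where "P = PiM I (\<lambda>_. N)"
  interpret N: prob_space N by (rule N)
  interpret P: prob_space P unfolding P_def by (rule prob_space_PiM) (use N in auto)
  have finK: "finite K" using fin K finite_subset by blast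
  have int1: "integrable N (\<lambda>x. x)"
    using N.square_integrable_imp_integrable[of "\<lambda>x. x"] int2 by (simp add: measurable_cong_sets[OF sN refl])
  have intY2: "integrable N (\<lambda>x. (x - \<mu>)\<^sup>2)"
    using int1 int2 unfolding power2_diff by (intro Bochner_Integration.integrable_diff Bochner_Integration.integrable_add) auto
  have intY: "integrable N (\<lambda>x. x - \<mu>)" using int1 by simp
  have EY: "integral\<^sup>L N (\<lambda>x. x - \<mu>) = 0" using int1 mu by (simp add: N.prob_space)
  have cY: "j \<in> I \<Longrightarrow> integrable P (\<lambda>x. x j - \<mu>) \<and> integral\<^sup>L P (\<lambda>x. x j - \<mu>) = 0" for j
    using comp_integral[OF N sN, of j I "\<lambda>x. x - \<mu>"] intY EY unfolding P_def by simp
  have cY2: "j \<in> I \<Longrightarrow> integrable P (\<lambda>x. (x j - \<mu>)\<^sup>2) \<and> integral\<^sup>L P (\<lambda>x. (x j - \<mu>)\<^sup>2) = integral\<^sup>L N (\<lambda>x. (x - \<mu>)\<^sup>2)" for j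
    using comp_integral[OF N sN, of j I "\<lambda>x. (x - \<mu>)\<^sup>2"] intY2 unfolding P_def by simp
  have ind: "P.indep_vars (\<lambda>_. borel) (\<lambda>i x. x i - \<mu>) I"
  proof -
    have "P.indep_vars (\<lambda>_. N) (\<lambda>i x. x i) I" unfolding P_def by (rule coord_indep[OF N fin])
    then have "P.indep_vars (\<lambda>_. borel) (\<lambda>i x. (\<lambda>y. y - \<mu>) (x i)) I"
      by (rule P.indep_vars_compose2) (simp add: measurable_cong_sets[OF sN refl])
    then show ?thesis by simp
  qed
  have cross: "j \<in> I \<Longrightarrow> k \<in> I \<Longrightarrow> j \<noteq> k \<Longrightarrow>
      integrable P (\<lambda>x. (x j - \<mu>) * (x k - \<mu>)) \<and> integral\<^sup>L P (\<lambda>x. (x j - \<mu>) * (x k - \<mu>)) = 0" for j k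
  proof -
    assume jk: "j \<in> I" "k \<in> I" "j \<noteq> k"
    have ind2: "P.indep_vars (\<lambda>_. borel) (\<lambda>i x. x i - \<mu>) {j, k}"
      by (rule P.indep_vars_subset[OF ind]) (use jk in auto)
    have ints: "\<And>i. i \<in> {j,k} \<Longrightarrow> integrable P (\<lambda>x. x i - \<mu>)" using cY jk by auto
    have "integrable P (\<lambda>x. \<Prod>i\<in>{j,k}. x i - \<mu>)"
      by (rule P.indep_vars_integrable[OF _ ind2 ints]) auto
    moreover have "integral\<^sup>L P (\<lambda>x. \<Prod>i\<in>{j,k}. x i - \<mu>) = (\<Prod>i\<in>{j,k}. integral\<^sup>L P (\<lambda>x. x i - \<mu>))"
      by (rule P.indep_vars_lebesgue_integral[OF _ ind2 ints]) auto
    ultimately show ?thesis using jk cY by simp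
  qed
  have prodint: "j \<in> K \<Longrightarrow> k \<in> K \<Longrightarrow> integrable P (\<lambda>x. (x j - \<mu>) * (x k - \<mu>)) \<and>
      integral\<^sup>L P (\<lambda>x. (x j - \<mu>) * (x k - \<mu>)) = (if j = k then integral\<^sup>L N (\<lambda>x. (x - \<mu>)\<^sup>2) else 0)" for j k
  proof (cases "j = k")
    case True
    assume "j \<in> K" "k \<in> K"
    then show ?thesis using cY2[of j] K True by (auto simp: power2_eq_square)
  next
    case False
    assume "j \<in> K" "k \<in> K"
    then show ?thesis using cross[of j k] K False by auto
  qed
  have sq: "(\<lambda>x. (\<Sum>j\<in>K. x j - \<mu>)\<^sup>2) = (\<lambda>x. \<Sum>j\<in>K. \<Sum>k\<in>K. (x j - \<mu>) * (x k - \<mu>))"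
    by (simp add: power2_eq_square sum_product)
  show "integrable P (\<lambda>x. (\<Sum>j\<in>K. x j - \<mu>)\<^sup>2)"
    unfolding sq using prodint by (intro Bochner_Integration.integrable_sum) auto
  have "integral\<^sup>L P (\<lambda>x. (\<Sum>j\<in>K. x j - \<mu>)\<^sup>2) = (\<Sum>j\<in>K. \<Sum>k\<in>K. integral\<^sup>L P (\<lambda>x. (x j - \<mu>) * (x k - \<mu>)))"
    unfolding sq using prodint
    by (subst Bochner_Integration.integral_sum) (auto intro!: sum.cong Bochner_Integration.integral_sum Bochner_Integration.integrable_sum)
  also have "\<dots> = (\<Sum>j\<in>K. \<Sum>k\<in>K. (if j = k then integral\<^sup>L N (\<lambda>x. (x - \<mu>)\<^sup>2) else 0))"
    using prodint by (intro sum.cong refl) auto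
  also have "\<dots> = card K * integral\<^sup>L N (\<lambda>x. (x - \<mu>)\<^sup>2)"
    using finK by simp
  finally show "integral\<^sup>L P (\<lambda>x. (\<Sum>j\<in>K. x j - \<mu>)\<^sup>2) = card K * integral\<^sup>L N (\<lambda>x. (x - \<mu>)\<^sup>2)" .
  show "integral\<^sup>L P (\<lambda>x. (\<Sum>j\<in>K. x j - \<mu>)) = 0"
    using cY K by (subst Bochner_Integration.integral_sum) (auto intro!: sum.neutral)
qed

lemma lower_bound:
  fixes N :: "real measure" and n :: nat and \<mu> t s \<gamma> :: real
  assumes N: "prob_space N" and sN: "sets N = sets borel"
    and int2: "integrable N (\<lambda>x. x\<^sup>2)" and mu: "\<mu> = integral\<^sup>L N (\<lambda>x. x)"
    and n: "n \<ge> 1" and t: "t > 0" and tdef: "t = \<gamma> - n * \<mu>" and s: "s = \<mu> + 3/2 * t" and s0: "s > 0"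
  shows "ptilde n \<gamma> N \<ge> n * measure N {s<..} *
     (1 - n * integral\<^sup>L N (\<lambda>x. x\<^sup>2) / s\<^sup>2 - 4 * n * integral\<^sup>L N (\<lambda>x. (x - \<mu>)\<^sup>2) / t\<^sup>2)"
proof -
  interpret N: prob_space N by (rule N)
  define P where "P = PiM {..<n} (\<lambda>_. N)"
  interpret P: prob_space P unfolding P_def by (rule prob_space_PiM) (use N in auto)
  define E where "E = {x \<in> space P. (\<Sum>i<n. x i) \<ge> \<gamma>}"
  define q where "q = measure N {s<..}"
  define m2 where "m2 = integral\<^sup>L N (\<lambda>x. x\<^sup>2)"
  define v where "v = integral\<^sup>L N (\<lambda>x. (x - \<mu>)\<^sup>2)"
  define K where "K i = {..<n} - {i}" for i :: nat
  define Z where "Z i x = (\<Sum>j\<in>K i. x j - \<mu>)" for i :: nat and x :: "nat \<Rightarrow> real"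
  define C where "C i = {x \<in> space P. (\<forall>j\<in>K i. x j \<le> s) \<and> Z i x \<ge> - t / 2}" for i
  define A where "A i = {x \<in> space P. x i > s} \<inter> C i" for i
  have Es: "E \<in> sets P" unfolding E_def P_def using sN by measurable
  have Cs: "C i \<in> sets P" for i unfolding C_def Z_def P_def K_def using sN by measurable
  have As: "A i \<in> sets P" if i: "i < n" for i
  proof -
    have "{x \<in> space P. x i > s} \<in> sets P" unfolding P_def using sN i by (measurable; simp add: i)
    then show ?thesis unfolding A_def using Cs[of i] by auto
  qed
  have q0: "q \<ge> 0" unfolding q_def by simp
  have cardK: "i < n \<Longrightarrow> real (card (K i)) = real n - 1" for i
    unfolding K_def using n by (simp add: of_nat_diff)
  have disj: "disjoint_family_on A {..<n}"
    unfolding disjoint_family_on_def A_def C_def K_def by force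
  have AE: "(\<Union>i\<in>{..<n}. A i) \<subseteq> E"
  proof (intro subsetI, elim UN_E)
    fix x i assume i: "i \<in> {..<n}" and x: "x \<in> A i"
    then have xs: "x \<in> space P" "x i > s" "Z i x \<ge> - t/2" unfolding A_def C_def by auto
    have "(\<Sum>j<n. x j) = x i + (\<Sum>j\<in>K i. x j)"
      unfolding K_def using i by (subst sum.remove[of _ i]) auto
    moreover have "Z i x = (\<Sum>j\<in>K i. x j) - card (K i) * \<mu>"
      unfolding Z_def by (simp add: sum_subtractf)
    ultimately have "(\<Sum>j<n. x j) = x i + Z i x + (real n - 1) * \<mu>"
      using cardK[of i] i by simp
    also have "\<dots> \<ge> s - t/2 + (real n - 1) * \<mu>" using xs by simp
    finally have h: "(\<Sum>j<n. x j) \<ge> s - t/2 + (real n - 1) * \<mu>" .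
    have "s - t/2 + (real n - 1) * \<mu> = \<gamma>" unfolding s tdef by (simp add: field_simps)
    then show "x \<in> E" unfolding E_def using xs h by simp
  qed
  have "P.prob E \<ge> P.prob (\<Union>i\<in>{..<n}. A i)"
    by (rule P.finite_measure_mono[OF AE Es])
  also have "P.prob (\<Union>i\<in>{..<n}. A i) = (\<Sum>i<n. P.prob (A i))"
    by (rule P.finite_measure_finite_Union) (use As disj in auto)
  finally have PE: "P.prob E \<ge> (\<Sum>i<n. P.prob (A i))" .
  have qm: "q \<le> m2 / s\<^sup>2"
  proof -
    have "q \<le> measure N {x \<in> space N. \<bar>x\<bar> \<ge> s}"
      unfolding q_def using s0 sN by (intro N.finite_measure_mono) (auto simp: sets_eq_imp_space_eq)
    also have "\<dots> \<le> m2 / s\<^sup>2" unfolding m2_def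
      by (rule N.second_moment_method) (use int2 s0 sN in \<open>auto simp: measurable_cong_sets[OF sN refl]\<close>)
    finally show ?thesis .
  qed
  have PA: "P.prob (A i) \<ge> q * (1 - n * m2 / s\<^sup>2 - 4 * n * v / t\<^sup>2)" if i: "i < n" for i
  proof -
    have Ksub: "K i \<subseteq> {..<n}" unfolding K_def by auto
    have finK: "finite (K i)" unfolding K_def by simp
    have ind: "P.indep_vars (\<lambda>_. N) (\<lambda>i x. x i) {..<n}" unfolding P_def by (rule coord_indep[OF N]) simp
    have iv: "P.indep_var (PiM {i} (\<lambda>_. N)) (\<lambda>\<omega>. restrict \<omega> {i}) (PiM (K i) (\<lambda>_. N)) (\<lambda>\<omega>. restrict \<omega> (K i))"
      using P.indep_var_restrict[OF ind, of "{i}" "K i"] i unfolding K_def by auto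
    define Xa where "Xa = {f \<in> space (PiM {i} (\<lambda>_. N)). f i > s}"
    define Xb where "Xb = {f \<in> space (PiM (K i) (\<lambda>_. N)). (\<forall>j\<in>K i. f j \<le> s) \<and> (\<Sum>j\<in>K i. f j - \<mu>) \<ge> - t / 2}"
    have Xas: "Xa \<in> sets (PiM {i} (\<lambda>_. N))" unfolding Xa_def using sN by measurable
    have Xbs: "Xb \<in> sets (PiM (K i) (\<lambda>_. N))" unfolding Xb_def using sN finK by measurable
    have e1: "(\<lambda>x. (restrict x {i}, restrict x (K i))) -` (Xa \<times> Xb) \<inter> space P = A i"
      unfolding A_def C_def Xa_def Xb_def Z_def P_def using i by (auto simp: space_PiM PiE_iff extensional_def K_def)
    have e2: "(\<lambda>x. restrict x {i}) -` Xa \<inter> space P = {x \<in> space P. x i \<in> {s<..}}"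
      unfolding Xa_def P_def using i by (auto simp: space_PiM PiE_iff extensional_def)
    have e3: "(\<lambda>x. restrict x (K i)) -` Xb \<inter> space P = C i"
      unfolding C_def Xb_def Z_def P_def using i by (auto simp: space_PiM PiE_iff extensional_def K_def)
    have e4: "P.prob {x \<in> space P. x i \<in> {s<..}} = q"
      unfolding P_def q_def by (rule comp_prob[OF N sN]) (use i in auto)
    have indepA: "P.prob (A i) = q * P.prob (C i)"
      using P.indep_varD[OF iv Xas Xbs] unfolding e1 e2 e3 e4 .
    have PC: "P.prob (C i) \<ge> 1 - n * m2 / s\<^sup>2 - 4 * n * v / t\<^sup>2"
    proof -
      define U1 where "U1 = (\<Union>j\<in>K i. {x \<in> space P. x j \<in> {s<..}})"
      define U2 where "U2 = {x \<in> space P. \<bar>Z i x\<bar> \<ge> t / 2}"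
      have Zm: "Z i \<in> borel_measurable P" unfolding Z_def P_def K_def using sN by measurable
      have U1s: "U1 \<in> sets P" unfolding U1_def P_def K_def using sN by measurable
      have U2s: "U2 \<in> sets P" unfolding U2_def using Zm by measurable
      have sub: "space P - C i \<subseteq> U1 \<union> U2" unfolding C_def U1_def U2_def by auto
      have "1 - P.prob (C i) = P.prob (space P - C i)" using P.prob_compl[OF Cs[of i]] by simp
      also have "\<dots> \<le> P.prob (U1 \<union> U2)" using sub U1s U2s by (intro P.finite_measure_mono) auto
      also have "\<dots> \<le> P.prob U1 + P.prob U2"
        using U1s U2s by (intro measure_subadditive) (auto simp: P.emeasure_eq_measure)
      also have "P.prob U1 \<le> (\<Sum>j\<in>K i. P.prob {x \<in> space P. x j \<in> {s<..}})"
        unfolding U1_def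
      proof (rule P.finite_measure_subadditive_finite)
        show "finite (K i)" by fact
        show "(\<lambda>j. {x \<in> space P. x j \<in> {s<..}}) ` K i \<subseteq> P.events"
          unfolding P_def K_def using sN by auto
      qed
      also have "(\<Sum>j\<in>K i. P.prob {x \<in> space P. x j \<in> {s<..}}) = card (K i) * q"
        unfolding P_def q_def using comp_prob[OF N sN _ , of _ "{..<n}" "{s<..}"] by (simp add: K_def)
      also have "P.prob U2 \<le> integral\<^sup>L P (\<lambda>x. (Z i x)\<^sup>2) / (t/2)\<^sup>2"
        unfolding U2_def
        by (rule P.second_moment_method[OF Zm]) (use t sum_sq_integral(1)[OF N sN _ Ksub int2 mu] in \<open>auto simp: Z_def P_def\<close>)
      also have "integral\<^sup>L P (\<lambda>x. (Z i x)\<^sup>2) = card (K i) * v"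
        unfolding Z_def P_def v_def using sum_sq_integral(2)[OF N sN _ Ksub int2 mu] by simp
      finally have "1 - P.prob (C i) \<le> card (K i) * q + card (K i) * v / (t/2)\<^sup>2" by simp
      also have "\<dots> \<le> n * (m2 / s\<^sup>2) + n * v / (t/2)\<^sup>2"
      proof -
        have v0: "v \<ge> 0" unfolding v_def by simp
        have m0: "m2 / s\<^sup>2 \<ge> 0" unfolding m2_def by simp
        have c: "real (card (K i)) \<le> n" using cardK[OF i] by simp
        have "card (K i) * q \<le> n * (m2 / s\<^sup>2)" using c qm q0 m0 by (intro mult_mono) auto
        moreover have "card (K i) * v / (t/2)\<^sup>2 \<le> n * v / (t/2)\<^sup>2"
          using c v0 by (intro divide_right_mono mult_right_mono) auto
        ultimately show ?thesis by simp
      qed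
      finally show ?thesis by (simp add: power_divide)
    qed
    show ?thesis using indepA PC q0 by (simp add: mult_left_mono)
  qed
  have "(\<Sum>i<n. P.prob (A i)) \<ge> (\<Sum>i<n. q * (1 - n * m2 / s\<^sup>2 - 4 * n * v / t\<^sup>2))"
    using PA by (intro sum_mono) auto
  then have "P.prob E \<ge> n * q * (1 - n * m2 / s\<^sup>2 - 4 * n * v / t\<^sup>2)" using PE by simp
  then show ?thesis unfolding q_def m2_def v_def E_def P_def ptilde_def by simp
qed


theorem theorem5:
  fixes f :: "real \<Rightarrow> real" and M :: "real measure"
    and L :: "real \<Rightarrow> real" and \<alpha> \<delta> \<mu> \<beta> :: real
    and \<gamma> u :: "nat \<Rightarrow> real"
  assumes f_meas: "f \<in> borel_measurable borel"
    and f_nonneg: "\<And>x. f x \<ge> 0"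
    and M_def: "M = density lborel (\<lambda>x. ennreal (f x))"
    and prob: "prob_space M"
    and mean: "\<mu> = (\<integral>x. x \<partial>M)"
    and tail: "\<And>x. x > 0 \<Longrightarrow> 1 - measure M {..x} = L x * x powr (-\<alpha>)"
    and sv: "slowly_varying L"
    and alpha: "\<alpha> > 2"
    and delta: "\<delta> > 0"
    and moment: "integrable M (\<lambda>x. \<bar>x\<bar> powr (2 + \<delta>))"
    and gamma: "filterlim (\<lambda>n. (\<gamma> n - real n * \<mu>) / sqrt (real n * ln (real n))) at_top sequentially"
    and beta: "\<beta> > 1"
    and u: "filterlim (\<lambda>n. u n / (\<gamma> n - real n * \<mu>) powr \<beta>) at_top sequentially"
  shows "(\<lambda>n. ptilde n (\<gamma> n) (trunc_dist M (u n)) - ptilde n (\<gamma> n) M)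
           \<in> o(\<lambda>n. ptilde n (\<gamma> n) M)"
proof -
  interpret M: prob_space M by (rule prob)
  have sM: "sets M = sets borel" using M_def by simp
  have spM: "space M = UNIV" using M_def by simp
  define Fb where "Fb x = measure M {x<..}" for x
  have Fb_compl: "1 - measure M {..x} = Fb x" for x
  proof -
    have "measure M (space M - {..x}) = 1 - measure M {..x}" by (rule M.prob_compl) (simp add: sM)
    moreover have "space M - {..x} = {x<..}" using spM by auto
    ultimately show ?thesis unfolding Fb_def by simp
  qed
  have tl: "x > 0 \<Longrightarrow> Fb x = L x * x powr (-\<alpha>)" for x using tail[of x] Fb_compl[of x] by simp
  have Fb_nonneg: "Fb x \<ge> 0" for x unfolding Fb_def by simp
  have Fb_mono: "x \<le> y \<Longrightarrow> Fb y \<le> Fb x" for x y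
    unfolding Fb_def by (rule M.finite_measure_mono) (auto simp: sM)
  obtain x0 where x0: "x0 > 0" "\<And>x. x \<ge> x0 \<Longrightarrow> Fb (2 * x) \<le> Fb x / 2"
    using half_exists[OF tl sv alpha Fb_nonneg] by blast
  have rb: "Fb y \<le> 2 * (x / y) * Fb x" if "x0 \<le> x" "x \<le> y" for x y
    using ratio_bound[of Fb x0 x y] Fb_mono Fb_nonneg x0 that by blast
  have int2: "integrable M (\<lambda>x. x\<^sup>2)"
  proof (rule Bochner_Integration.integrable_bound)
    show "integrable M (\<lambda>x. 1 + \<bar>x\<bar> powr (2 + \<delta>))" using moment by simp
    show "(\<lambda>x. x\<^sup>2) \<in> borel_measurable M" by (simp add: measurable_cong_sets[OF sM refl])
    show "AE x in M. norm (x\<^sup>2) \<le> norm (1 + \<bar>x\<bar> powr (2 + \<delta>))"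
    proof (intro AE_I2)
      fix x :: real
      have "x\<^sup>2 \<le> 1 + \<bar>x\<bar> powr (2 + \<delta>)"
      proof (cases "\<bar>x\<bar> \<le> 1")
        case True
        then have "x\<^sup>2 \<le> 1" by (simp add: abs_square_le_1)
        then show ?thesis by (smt (verit) powr_ge_zero)
      next
        case False
        then have "x\<^sup>2 = \<bar>x\<bar> powr 2" by (simp add: powr_numeral)
        also have "\<dots> \<le> \<bar>x\<bar> powr (2 + \<delta>)" using False delta by (intro powr_mono) auto
        finally show ?thesis by simp
      qed
      then show "norm (x\<^sup>2) \<le> norm (1 + \<bar>x\<bar> powr (2 + \<delta>))" by simp
    qed
  qed
  define m2 where "m2 = integral\<^sup>L M (\<lambda>x. x\<^sup>2)"
  define v where "v = integral\<^sup>L M (\<lambda>x. (x - \<mu>)\<^sup>2)"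
  have m20: "m2 \<ge> 0" unfolding m2_def by simp
  have v0: "v \<ge> 0" unfolding v_def by simp
  define t where "t n = \<gamma> n - real n * \<mu>" for n
  define W where "W n = t n / sqrt (real n)" for n
  define P where "P n = ptilde n (\<gamma> n) M" for n
  define K0 where "K0 = 16 * (m2 + v + 1)"
  have K0: "K0 > 0" unfolding K0_def using m20 v0 by simp
  have gam_ev: "\<forall>\<^sub>F n in sequentially. (\<gamma> n - real n * \<mu>) / sqrt (real n * ln (real n)) \<ge> 1"
    using gamma unfolding filterlim_at_top by blast
  have Wlim: "filterlim W at_top sequentially"
  proof (rule filterlim_at_top_mono[OF gamma])
    show "\<forall>\<^sub>F n in sequentially. (\<gamma> n - real n * \<mu>) / sqrt (real n * ln (real n)) \<le> W n"
      using gam_ev eventually_ge_at_top[of "3::nat"]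
    proof eventually_elim
      case (elim n)
      have ln1: "ln (real n) \<ge> 1"
      proof -
        have "exp 1 \<le> real n" using exp_le elim(2) by linarith
        then show ?thesis using elim(2) by (subst ln_ge_iff) auto
      qed
      have sq: "0 < sqrt (real n)" "sqrt (real n) \<le> sqrt (real n * ln (real n))"
        using elim(2) ln1 by (auto intro!: real_sqrt_le_mono simp: mult_le_cancel_left1)
      then have pos: "sqrt (real n * ln (real n)) > 0" by linarith
      then have "t n \<ge> sqrt (real n * ln (real n))" using elim(1) unfolding t_def by (simp add: le_divide_eq)
      then have "t n \<ge> 0" using pos by linarith
      then show ?case unfolding W_def t_def using sq pos
        by (intro divide_left_mono) (auto simp: t_def)
    qed
  qed
  have W2: "\<forall>\<^sub>F n in sequentially. (W n)\<^sup>2 \<ge> K0"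
    using filterlim_pow_at_top[OF _ Wlim, of 2] unfolding filterlim_at_top by auto
  have tlim: "filterlim t at_top sequentially"
  proof (rule filterlim_at_top_mono[OF Wlim])
    show "\<forall>\<^sub>F n in sequentially. W n \<le> t n"
      using Wlim[unfolded filterlim_at_top, rule_format, of 0] eventually_ge_at_top[of "1::nat"]
    proof eventually_elim
      case (elim n)
      have "sqrt (real n) \<ge> 1" using elim(2) by simp
      then have e: "W n * sqrt (real n) = t n" unfolding W_def by simp
      have "W n * 1 \<le> W n * sqrt (real n)" using elim(1) \<open>sqrt (real n) \<ge> 1\<close> by (intro mult_left_mono) auto
      then show ?case using e by simp
    qed
  qed
  show ?thesis
  proof (rule landau_o.smallI)
    fix c :: real assume c: "c > 0"
    define R where "R = max 16 (24 / c)"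
    define T0 where "T0 = max (max 1 (2 * \<bar>\<mu>\<bar>)) x0"
    have key: "\<bar>ptilde n (\<gamma> n) (trunc_dist M (u n)) - P n\<bar> \<le> c * \<bar>P n\<bar>"
      if n3: "n \<ge> 3" and hW: "(W n)\<^sup>2 \<ge> K0" and ht: "t n \<ge> T0" and hu: "u n / t n powr \<beta> \<ge> R" for n
    proof -
      define tn where "tn = t n"
      define s where "s = \<mu> + 3/2 * tn"
      have n1: "n \<ge> 1" using n3 by simp
      have npos: "real n > 0" using n1 by simp
      have t1: "tn \<ge> 1" "tn \<ge> 2 * \<bar>\<mu>\<bar>" "tn \<ge> x0" using ht unfolding T0_def tn_def by auto
      have tpos: "tn > 0" using t1 by simp
      have s_ge: "s \<ge> tn" "s \<le> 2 * tn" using t1 unfolding s_def by auto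
      have spos: "s > 0" and sx0: "s \<ge> x0" using s_ge t1 by auto
      have Wt: "(W n)\<^sup>2 = tn\<^sup>2 / n" unfolding W_def tn_def by (simp add: power_divide)
      have "K0 * n \<le> tn\<^sup>2" using hW Wt npos by (simp add: le_divide_eq)
      then have nt: "n / tn\<^sup>2 \<le> 1 / K0" using K0 tpos by (simp add: field_simps)
      have ns: "n / s\<^sup>2 \<le> n / tn\<^sup>2"
        using s_ge tpos npos by (intro divide_left_mono power_mono) auto
      have tdef: "tn = \<gamma> n - real n * \<mu>" unfolding tn_def t_def by simp
      have LB: "P n \<ge> n * Fb s * (1 - n * m2 / s\<^sup>2 - 4 * n * v / tn\<^sup>2)"
        using lower_bound[OF prob sM int2 mean n1 tpos tdef s_def spos]
        unfolding P_def Fb_def m2_def v_def by simp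
      have a1: "n * m2 / s\<^sup>2 \<le> 1/4"
      proof -
        have "n * m2 / s\<^sup>2 = m2 * (n / s\<^sup>2)" by simp
        also have "\<dots> \<le> m2 * (1 / K0)" using ns nt m20 by (intro mult_left_mono) auto
        also have "\<dots> \<le> 1/4" using K0 m20 v0 unfolding K0_def by (simp add: field_simps)
        finally show ?thesis .
      qed
      have a2: "4 * n * v / tn\<^sup>2 \<le> 1/4"
      proof -
        have "4 * n * v / tn\<^sup>2 = (4 * v) * (n / tn\<^sup>2)" by simp
        also have "\<dots> \<le> (4 * v) * (1 / K0)" using nt v0 by (intro mult_left_mono) auto
        also have "\<dots> \<le> 1/4" using K0 m20 v0 unfolding K0_def by (simp add: field_simps)
        finally show ?thesis .
      qed
      have nFs0: "n * Fb s \<ge> 0" using Fb_nonneg by simp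
      have PL: "P n \<ge> n * Fb s / 2"
      proof -
        have "n * Fb s * (1/2) \<le> n * Fb s * (1 - n * m2 / s\<^sup>2 - 4 * n * v / tn\<^sup>2)"
          using a1 a2 nFs0 by (intro mult_left_mono) auto
        then show ?thesis using LB by linarith
      qed
      have P01: "P n \<le> 1" "P n \<ge> 0"
      proof -
        interpret PP: prob_space "PiM {..<n} (\<lambda>_. M)" by (rule prob_space_PiM) (use prob in auto)
        show "P n \<le> 1" "P n \<ge> 0" unfolding P_def ptilde_def by auto
      qed
      have nFs: "n * Fb s \<le> 2" using PL P01 by simp
      have tb: "tn powr \<beta> \<ge> tn"
      proof -
        have "tn powr 1 \<le> tn powr \<beta>" using t1 beta by (intro powr_mono) auto
        then show ?thesis using tpos by simp
      qed
      have Rpos: "R \<ge> 16" "R \<ge> 24 / c" unfolding R_def by auto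
      have uR: "u n \<ge> R * tn"
      proof -
        have "R * tn powr \<beta> \<le> u n" using hu tpos unfolding tn_def by (simp add: le_divide_eq)
        moreover have "R * tn \<le> R * tn powr \<beta>" using tb Rpos by (intro mult_left_mono) auto
        ultimately show ?thesis by simp
      qed
      have upos: "u n > 0" using uR Rpos tpos by (smt (verit) mult_pos_pos)
      have tu: "tn / u n \<le> 1 / R"
        using uR upos Rpos tpos by (simp add: field_simps)
      have su: "s \<le> u n"
      proof -
        have "2 * tn \<le> R * tn" using Rpos tpos by (intro mult_right_mono) auto
        then show ?thesis using s_ge uR by simp
      qed
      have qu: "Fb (u n) \<le> 2 * (s / u n) * Fb s" by (rule rb[OF sx0 su])
      also have "\<dots> \<le> 2 * (2 * tn / u n) * Fb s"
        using s_ge upos Fb_nonneg[of s] by (intro mult_right_mono mult_left_mono divide_right_mono) auto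
      finally have qu2: "Fb (u n) \<le> 4 * (tn / u n) * Fb s" by simp
      have nqu: "n * Fb (u n) \<le> 4 * (tn / u n) * (n * Fb s)"
        using mult_left_mono[OF qu2, of "real n"] by (simp add: algebra_simps)
      have tu0: "tn / u n \<ge> 0" using tpos upos by simp
      have "4 * (tn / u n) * (n * Fb s) \<le> 4 * (1 / R) * 2"
        using tu nFs tu0 nFs0 Rpos by (intro mult_mono) auto
      also have "\<dots> \<le> 1/2" using Rpos by (simp add: field_simps)
      finally have nqu_half: "n * Fb (u n) \<le> 1/2" using nqu by simp
      have D: "\<bar>ptilde n (\<gamma> n) (trunc_dist M (u n)) - ptilde n (\<gamma> n) M\<bar> \<le> 3 * n * Fb (u n)"
        by (rule diff_bound[OF prob sM n1]) (use Fb_compl nqu_half in auto)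
      also have "\<dots> \<le> 3 * (4 * (tn / u n) * (n * Fb s))" using nqu by simp
      also have "\<dots> \<le> 3 * (4 * (1 / R) * (2 * P n))"
      proof -
        have "(tn / u n) * (n * Fb s) \<le> (1 / R) * (2 * P n)"
          by (rule mult_mono) (use tu PL Rpos nFs0 in auto)
        then show ?thesis by simp
      qed
      also have "\<dots> = (24 / R) * P n" by simp
      also have "\<dots> \<le> c * P n"
      proof -
        have "24 / R \<le> c" using Rpos c by (simp add: divide_le_eq field_simps)
        then show ?thesis using P01 by (intro mult_right_mono) auto
      qed
      finally show ?thesis using P01 unfolding P_def by simp
    qed
    have "\<forall>\<^sub>F n in sequentially. n \<ge> 3 \<and> (W n)\<^sup>2 \<ge> K0 \<and> t n \<ge> T0 \<and> u n / t n powr \<beta> \<ge> R"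
      using eventually_ge_at_top[of "3::nat"] W2 tlim[unfolded filterlim_at_top, rule_format, of T0]
        u[unfolded filterlim_at_top, rule_format, of R]
      by eventually_elim (auto simp: t_def)
    then show "\<forall>\<^sub>F n in sequentially. norm (ptilde n (\<gamma> n) (trunc_dist M (u n)) - ptilde n (\<gamma> n) M) \<le> c * norm (ptilde n (\<gamma> n) M)"
      by eventually_elim (use key in \<open>auto simp: P_def\<close>)
  qed
qed

end
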